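(* Let $M$ be a smooth 3-manifold with a smooth contact sub-Riemannian structure $(D,g)$, let $S\subset M$ be an embedded $C^2$ surface, and let $p\in S$ be a characteristic point. Near $p$ let $(X_1,X_2)$ be an oriented $g$-orthonormal frame of $D$ and $X_0$ a vector field transverse to $D$, and for $\varepsilon>0$ let $g^\varepsilon$ be the Riemannian metric for which $(\varepsilon X_0,X_1,X_2)$ is orthonormal. Then, as $\varepsilon\to0$, $$K^\varepsilon_{\mathrm{ext}}(p)=-\frac{3}{4\varepsilon^2}(c^0_{12}(p))^2+O(1).$$
   Context: A point $p\in S$ is characteristic if $T_pS=D_p$. The structure functions $c^k_{ij}$ are defined by $[X_j,X_i]=c^1_{ij}X_1+c^2_{ij}X_2+c^0_{ij}X_0$; $c^0_{12}$ is the $X_0$-coefficient of $[X_2,X_1]$. With $\overline\nabla^\varepsilon$ the Levi-Civita connection of $g^\varepsilon$ and $(X,Y)$ any frame of $TS$, the extrinsic curvature is $K^\varepsilon_{\mathrm{ext}}=\dfrac{\langle\overline\nabla^\varepsilon_X\overline\nabla^\varepsilon_YY-\overline\nabla^\varepsilon_Y\overline\nabla^\varepsilon_XY-\overline\nabla^\varepsilon_{[X,Y]}Y,X\rangle_{g^\varepsilon}}{|X|^2_{g^\varepsilon}|Y|^2_{g^\varepsilon}-\langle X,Y\rangle^2_{g^\varepsilon}}$ (the sectional curvature of $g^\varepsilon$ on the plane $TS$). *)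

theory Defs
  imports "HOL-Analysis.Analysis" "HOL-Library.Landau_Symbols"
begin

fun Ck :: "nat \<Rightarrow> ('a::real_normed_vector \<Rightarrow> 'b::real_normed_vector) \<Rightarrow> 'a set \<Rightarrow> bool" where
  "Ck 0 f S = continuous_on S f"
| "Ck (Suc k) f S = (\<exists>f'. (\<forall>x\<in>S. (f has_derivative f' x) (at x)) \<and> (\<forall>v. Ck k (\<lambda>x. f' x v) S))"

definition smooth_on :: "('a::real_normed_vector \<Rightarrow> 'b::real_normed_vector) \<Rightarrow> 'a set \<Rightarrow> bool" where
  "smooth_on f S \<longleftrightarrow> (\<forall>k. Ck k f S)"

definition embedded_C2_surface :: "(real^3) set \<Rightarrow> bool" where
  "embedded_C2_surface S \<longleftrightarrow>
     (\<forall>p\<in>S. \<exists>V (W::(real^2) set) \<phi>. open V \<and> p \<in> V \<and> open W \<and> Ck 2 \<phi> W \<and>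
        \<phi> ` W = S \<inter> V \<and> inj_on \<phi> W \<and> continuous_on (S \<inter> V) (inv_into W \<phi>) \<and>
        (\<forall>w\<in>W. inj (frechet_derivative \<phi> (at w))))"

definition tangent_space :: "(real^3) set \<Rightarrow> real^3 \<Rightarrow> (real^3) set" where
  "tangent_space S p = {v. \<exists>\<gamma>::real \<Rightarrow> real^3. \<gamma> 0 = p \<and> (\<forall>t. \<gamma> t \<in> S) \<and> (\<gamma> has_vector_derivative v) (at 0)}"

definition dird :: "(real^3 \<Rightarrow> 'b::real_normed_vector) \<Rightarrow> real^3 \<Rightarrow> real^3 \<Rightarrow> 'b" where
  "dird f x c = vector_derivative (\<lambda>t. f (x + t *\<^sub>R c)) (at 0)"

definition lie :: "(real^3 \<Rightarrow> real^3) \<Rightarrow> (real^3 \<Rightarrow> real^3) \<Rightarrow> real^3 \<Rightarrow> real^3" where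
  "lie U V = (\<lambda>x. dird V x (U x) - dird U x (V x))"

definition frame_mat :: "(real^3 \<Rightarrow> real^3) \<Rightarrow> (real^3 \<Rightarrow> real^3) \<Rightarrow> (real^3 \<Rightarrow> real^3) \<Rightarrow> real^3 \<Rightarrow> real^3^3" where
  "frame_mat X0 X1 X2 x = transpose (vector [X0 x, X1 x, X2 x])"

text \<open>Structure function c^0_12: X0-coefficient of [X2,X1].\<close>
definition c0_12 :: "(real^3 \<Rightarrow> real^3) \<Rightarrow> (real^3 \<Rightarrow> real^3) \<Rightarrow> (real^3 \<Rightarrow> real^3) \<Rightarrow> real^3 \<Rightarrow> real" where
  "c0_12 X0 X1 X2 x = (matrix_inv (frame_mat X0 X1 X2 x) *v lie X2 X1 x) $ 1"

text \<open>Gram matrix of g^eps, for which (eps X0, X1, X2) is orthonormal.\<close>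
definition g_eps :: "real \<Rightarrow> (real^3 \<Rightarrow> real^3) \<Rightarrow> (real^3 \<Rightarrow> real^3) \<Rightarrow> (real^3 \<Rightarrow> real^3) \<Rightarrow> real^3 \<Rightarrow> real^3^3" where
  "g_eps \<epsilon> X0 X1 X2 x =
     transpose (matrix_inv (frame_mat X0 X1 X2 x)) **
     (\<chi> i j. if i = j then (if i = 1 then 1 / \<epsilon>\<^sup>2 else 1) else 0) **
     matrix_inv (frame_mat X0 X1 X2 x)"

definition ip :: "(real^3 \<Rightarrow> real^3^3) \<Rightarrow> real^3 \<Rightarrow> real^3 \<Rightarrow> real^3 \<Rightarrow> real" where
  "ip G x a b = a \<bullet> (G x *v b)"

text \<open>Christoffel symbols of the metric G (Koszul formula in coordinates).\<close>
definition christoffel :: "(real^3 \<Rightarrow> real^3^3) \<Rightarrow> real^3 \<Rightarrow> real^3 \<Rightarrow> real^3 \<Rightarrow> real^3" where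
  "christoffel G x a b = matrix_inv (G x) *v
     (\<chi> k. (a \<bullet> (dird G x b *v axis k 1) + b \<bullet> (dird G x a *v axis k 1)
            - a \<bullet> (dird G x (axis k 1) *v b)) / 2)"

definition nabla :: "(real^3 \<Rightarrow> real^3^3) \<Rightarrow> (real^3 \<Rightarrow> real^3) \<Rightarrow> (real^3 \<Rightarrow> real^3) \<Rightarrow> real^3 \<Rightarrow> real^3" where
  "nabla G U V = (\<lambda>x. dird V x (U x) + christoffel G x (U x) (V x))"

definition K_ext :: "(real^3 \<Rightarrow> real^3^3) \<Rightarrow> (real^3 \<Rightarrow> real^3) \<Rightarrow> (real^3 \<Rightarrow> real^3) \<Rightarrow> real^3 \<Rightarrow> real" where
  "K_ext G X Y p =
     ip G p (nabla G X (nabla G Y Y) p - nabla G Y (nabla G X Y) p - nabla G (lie X Y) Y p) (X p)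
     / (ip G p (X p) (X p) * ip G p (Y p) (Y p) - (ip G p (X p) (Y p))\<^sup>2)"

end

theory Submission
  imports Defs
begin

lemma Ck_cont: "Ck k f S \<Longrightarrow> continuous_on S f"
proof (induction k)
  case 0 then show ?case by simp
next
  case (Suc k)
  then obtain f' where "\<forall>x\<in>S. (f has_derivative f' x) (at x)" by auto
  then show ?case
    by (meson continuous_at_imp_continuous_on has_derivative_continuous)
qed

lemma Ck_Suc_mono: "Ck (Suc k) f S \<Longrightarrow> Ck k f S"
proof (induction k arbitrary: f)
  case 0 then show ?case using Ck_cont by (metis Ck.simps(1))
next
  case (Suc k)
  then obtain f' where "\<forall>x\<in>S. (f has_derivative f' x) (at x)" "\<forall>v. Ck (Suc k) (\<lambda>x. f' x v) S"
    by auto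
  then show ?case using Suc.IH by auto
qed

lemma Ck_SucI:
  assumes "\<forall>x\<in>S. (f has_derivative f' x) (at x)" "\<forall>v. Ck k (\<lambda>x. f' x v) S"
  shows "Ck (Suc k) f S"
  using assms by auto

lemma Ck_cong:
  assumes "open S" "\<And>x. x \<in> S \<Longrightarrow> f x = g x" "Ck k f S"
  shows "Ck k g S"
  using assms
proof (induction k arbitrary: f g)
  case 0 then show ?case using continuous_on_cong by (metis Ck.simps(1))
next
  case (Suc k)
  then obtain f' where f': "\<forall>x\<in>S. (f has_derivative f' x) (at x)" "\<forall>v. Ck k (\<lambda>x. f' x v) S"
    by auto
  have "\<forall>x\<in>S. (g has_derivative f' x) (at x)"
    using f'(1) Suc.prems by (metis has_derivative_transform_within_open)
  then show ?case using f'(2) by (rule Ck_SucI)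
qed

lemma Ck_const: fixes c :: "'b::real_normed_vector" and S :: "'a::real_normed_vector set"
  shows "Ck k (\<lambda>x. c) S"
proof (induction k arbitrary: c)
  case 0 then show ?case by simp
next
  case (Suc k)
  have "\<forall>x\<in>S. ((\<lambda>x. c) has_derivative (\<lambda>x v. 0) x) (at x)" by (simp add: has_derivative_const)
  moreover have "\<forall>v::'a. Ck k (\<lambda>x. (\<lambda>x v. 0::'b) x v) S" using Suc.IH by blast
  ultimately show ?case by (rule Ck_SucI)
qed

lemma Ck_add: "Ck k f S \<Longrightarrow> Ck k g S \<Longrightarrow> Ck k (\<lambda>x. f x + g x) S"
proof (induction k arbitrary: f g)
  case 0 then show ?case by (simp add: continuous_on_add)
next
  case (Suc k)
  from Suc.prems obtain f' where f': "\<forall>x\<in>S. (f has_derivative f' x) (at x)" "\<forall>v. Ck k (\<lambda>x. f' x v) S"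
    by auto
  from Suc.prems obtain g' where g': "\<forall>x\<in>S. (g has_derivative g' x) (at x)" "\<forall>v. Ck k (\<lambda>x. g' x v) S"
    by auto
  have "\<forall>x\<in>S. ((\<lambda>x. f x + g x) has_derivative (\<lambda>x v. f' x v + g' x v) x) (at x)"
    using f' g' by (auto intro: has_derivative_add)
  moreover have "\<forall>v. Ck k (\<lambda>x. (\<lambda>x v. f' x v + g' x v) x v) S" using f' g' Suc.IH by auto
  ultimately show ?case by (rule Ck_SucI)
qed

lemma Ck_linear:
  assumes "bounded_linear L" shows "Ck k f S \<Longrightarrow> Ck k (\<lambda>x. L (f x)) S"
proof (induction k arbitrary: f)
  case 0 then show ?case
    using assms by (simp add: bounded_linear.continuous_on[OF assms])
next
  case (Suc k)
  from Suc.prems obtain f' where f': "\<forall>x\<in>S. (f has_derivative f' x) (at x)" "\<forall>v. Ck k (\<lambda>x. f' x v) S"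
    by auto
  have "\<forall>x\<in>S. ((\<lambda>x. L (f x)) has_derivative (\<lambda>x v. L (f' x v)) x) (at x)"
    using f' assms by (auto intro: bounded_linear.has_derivative)
  moreover have "\<forall>v. Ck k (\<lambda>x. (\<lambda>x v. L (f' x v)) x v) S" using f' Suc.IH by auto
  ultimately show ?case by (rule Ck_SucI)
qed

lemma Ck_bilinear:
  assumes "bounded_bilinear b" shows "Ck k f S \<Longrightarrow> Ck k g S \<Longrightarrow> Ck k (\<lambda>x. b (f x) (g x)) S"
proof (induction k arbitrary: f g)
  case 0 then show ?case
    using assms by (simp add: bounded_bilinear.continuous_on)
next
  case (Suc k)
  from Suc.prems obtain f' where f': "\<forall>x\<in>S. (f has_derivative f' x) (at x)" "\<forall>v. Ck k (\<lambda>x. f' x v) S"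
    by auto
  from Suc.prems obtain g' where g': "\<forall>x\<in>S. (g has_derivative g' x) (at x)" "\<forall>v. Ck k (\<lambda>x. g' x v) S"
    by auto
  have fk: "Ck k f S" "Ck k g S" using Suc.prems Ck_Suc_mono by auto
  have "\<forall>x\<in>S. ((\<lambda>x. b (f x) (g x)) has_derivative (\<lambda>x v. b (f x) (g' x v) + b (f' x v) (g x)) x) (at x)"
    using f' g' assms by (auto intro: bounded_bilinear.FDERIV)
  moreover have "\<forall>v. Ck k (\<lambda>x. (\<lambda>x v. b (f x) (g' x v) + b (f' x v) (g x)) x v) S"
    using f' g' fk Suc.IH by (auto intro!: Ck_add)
  ultimately show ?case by (rule Ck_SucI)
qed

lemma Ck_inverse:
  fixes f :: "'a::real_normed_vector \<Rightarrow> real"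
  shows "Ck k f S \<Longrightarrow> (\<And>x. x \<in> S \<Longrightarrow> f x \<noteq> 0) \<Longrightarrow> Ck k (\<lambda>x. inverse (f x)) S"
proof (induction k arbitrary: f)
  case 0 then show ?case
    by (simp add: continuous_on_inverse)
next
  case (Suc k)
  from Suc.prems obtain f' where f': "\<forall>x\<in>S. (f has_derivative f' x) (at x)" "\<forall>v. Ck k (\<lambda>x. f' x v) S"
    by auto
  have fk: "Ck k f S" using Suc.prems(1) by (rule Ck_Suc_mono)
  have ik: "Ck k (\<lambda>x. inverse (f x)) S" using Suc.IH fk Suc.prems by auto
  have "\<forall>x\<in>S. ((\<lambda>x. inverse (f x)) has_derivative (\<lambda>x v. - (inverse (f x) * f' x v * inverse (f x))) x) (at x)"
    using f' Suc.prems by (auto intro: has_derivative_inverse)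
  moreover have "\<forall>v. Ck k (\<lambda>x. (\<lambda>x v. - (inverse (f x) * f' x v * inverse (f x))) x v) S"
  proof
    fix v
    have "Ck k (\<lambda>x. inverse (f x) * f' x v * inverse (f x)) S"
      using ik f' by (intro Ck_bilinear[OF bounded_bilinear_mult]) auto
    then show "Ck k (\<lambda>x. (\<lambda>x v. - (inverse (f x) * f' x v * inverse (f x))) x v) S"
      using Ck_linear[OF bounded_linear_minus[OF bounded_linear_ident]] by auto
  qed
  ultimately show ?case by (rule Ck_SucI)
qed


lemma smooth_add: "smooth_on f S \<Longrightarrow> smooth_on g S \<Longrightarrow> smooth_on (\<lambda>x. f x + g x) S"
  unfolding smooth_on_def by (auto intro: Ck_add)
lemma smooth_const: "smooth_on (\<lambda>x. c) S"
  unfolding smooth_on_def by (auto intro: Ck_const)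
lemma smooth_linear: "bounded_linear L \<Longrightarrow> smooth_on f S \<Longrightarrow> smooth_on (\<lambda>x. L (f x)) S"
  unfolding smooth_on_def by (auto intro: Ck_linear)
lemma smooth_bilinear: "bounded_bilinear b \<Longrightarrow> smooth_on f S \<Longrightarrow> smooth_on g S \<Longrightarrow> smooth_on (\<lambda>x. b (f x) (g x)) S"
  unfolding smooth_on_def by (auto intro: Ck_bilinear)
lemma smooth_inverse: "smooth_on f S \<Longrightarrow> (\<And>x. x \<in> S \<Longrightarrow> f x \<noteq> 0) \<Longrightarrow> smooth_on (\<lambda>x. inverse (f x :: real)) S"
  unfolding smooth_on_def by (auto intro: Ck_inverse)
lemma smooth_cong: "open S \<Longrightarrow> (\<And>x. x \<in> S \<Longrightarrow> f x = g x) \<Longrightarrow> smooth_on f S \<Longrightarrow> smooth_on g S"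
  unfolding smooth_on_def using Ck_cong by blast

lemma smooth_mult: "smooth_on f S \<Longrightarrow> smooth_on g S \<Longrightarrow> smooth_on (\<lambda>x. f x * g x :: real) S"
  by (rule smooth_bilinear[OF bounded_bilinear_mult])
lemma smooth_scaleR: "smooth_on f S \<Longrightarrow> smooth_on g S \<Longrightarrow> smooth_on (\<lambda>x. f x *\<^sub>R g x) S"
  by (rule smooth_bilinear[OF bounded_bilinear_scaleR])
lemma smooth_inner: "smooth_on f S \<Longrightarrow> smooth_on g S \<Longrightarrow> smooth_on (\<lambda>x. inner (f x) (g x) :: real) S"
  by (rule smooth_bilinear[OF bounded_bilinear_inner])
lemma smooth_minus: "smooth_on f S \<Longrightarrow> smooth_on (\<lambda>x. - f x) S"
  by (rule smooth_linear[OF bounded_linear_minus[OF bounded_linear_ident]])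
lemma smooth_diff: "smooth_on f S \<Longrightarrow> smooth_on g S \<Longrightarrow> smooth_on (\<lambda>x. f x - g x) S"
  using smooth_add[OF _ smooth_minus, of f S g] by simp
lemma smooth_nth: "smooth_on f S \<Longrightarrow> smooth_on (\<lambda>x. f x $ i) S"
  by (rule smooth_linear[OF bounded_linear_vec_nth])

definition DD :: "('a::real_normed_vector \<Rightarrow> 'b::real_normed_vector) \<Rightarrow> 'a \<Rightarrow> 'a \<Rightarrow> 'b" where
  "DD f x = frechet_derivative f (at x)"

lemma smooth_hasD: "smooth_on f S \<Longrightarrow> x \<in> S \<Longrightarrow> (f has_derivative DD f x) (at x)"
proof -
  assume "smooth_on f S" "x \<in> S"
  then have "Ck (Suc 0) f S" unfolding smooth_on_def by blast
  then obtain f' where "(f has_derivative f' x) (at x)" using \<open>x \<in> S\<close> by auto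
  then show ?thesis unfolding DD_def using frechet_derivative_at[of f "f' x" x] by simp
qed

lemma smooth_DD: assumes "open S" "smooth_on f S" shows "smooth_on (\<lambda>x. DD f x v) S"
  unfolding smooth_on_def
proof
  fix k
  have "Ck (Suc k) f S" using assms unfolding smooth_on_def by blast
  then obtain f' where f': "\<forall>x\<in>S. (f has_derivative f' x) (at x)" "\<forall>v. Ck k (\<lambda>x. f' x v) S" by auto
  have "\<And>x. x \<in> S \<Longrightarrow> f' x v = DD f x v" using f'(1) unfolding DD_def
    using frechet_derivative_at by fastforce
  then show "Ck k (\<lambda>x. DD f x v) S" using Ck_cong[OF assms(1), of "\<lambda>x. f' x v" "\<lambda>x. DD f x v" k] f'(2) by simp
qed

lemma linear_DD: "smooth_on f S \<Longrightarrow> x \<in> S \<Longrightarrow> linear (DD f x)"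
  by (rule has_derivative_linear[OF smooth_hasD])

lemma lin3: fixes L :: "real^3 \<Rightarrow> 'b::real_vector"
  assumes "linear L"
  shows "L v = (v$1) *\<^sub>R L (axis 1 1) + (v$2) *\<^sub>R L (axis 2 1) + (v$3) *\<^sub>R L (axis 3 1)"
proof -
  have "v = (\<Sum>i\<in>UNIV. (v$i) *\<^sub>R axis i 1)"
    using basis_expansion[of v] by (simp add: scalar_mult_eq_scaleR)
  moreover have "L (\<Sum>i\<in>UNIV. (v$i) *\<^sub>R axis i 1) = (\<Sum>i\<in>UNIV. (v$i) *\<^sub>R L (axis i 1))"
    by (simp add: linear_sum[OF assms] linear_scale[OF assms])
  ultimately have "L v = (\<Sum>i\<in>UNIV. (v$i) *\<^sub>R L (axis i 1))" by simp
  then show ?thesis by (simp add: sum_3)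
qed

lemma smooth_DD_apply:
  fixes f :: "real^3 \<Rightarrow> 'b::real_normed_vector"
  assumes "open S" "smooth_on f S" "smooth_on V S"
  shows "smooth_on (\<lambda>x. DD f x (V x)) S"
proof (rule smooth_cong[OF assms(1)])
  show "smooth_on (\<lambda>x. (V x$1) *\<^sub>R DD f x (axis 1 1) + (V x$2) *\<^sub>R DD f x (axis 2 1) + (V x$3) *\<^sub>R DD f x (axis 3 1)) S"
  proof -
    have d: "\<And>i. smooth_on (\<lambda>x. DD f x (axis i 1)) S" by (rule smooth_DD[OF assms(1,2)])
    have v: "\<And>i. smooth_on (\<lambda>x. V x $ i) S" by (rule smooth_nth[OF assms(3)])
    show ?thesis by (rule smooth_add[OF smooth_add]; rule smooth_scaleR[OF v d])
  qed
  fix x assume "x \<in> S"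
  then show "(V x$1) *\<^sub>R DD f x (axis 1 1) + (V x$2) *\<^sub>R DD f x (axis 2 1) + (V x$3) *\<^sub>R DD f x (axis 3 1) = DD f x (V x)"
    using lin3[OF linear_DD[OF assms(2)], of x "V x"] by simp
qed

lemma dird_hasD: assumes "(f has_derivative f') (at x)" shows "dird f x c = f' c"
proof -
  have l: "((\<lambda>t::real. x + t *\<^sub>R c) has_derivative (\<lambda>t. t *\<^sub>R c)) (at 0)"
  proof -
    have "((\<lambda>t::real. t *\<^sub>R c) has_derivative (\<lambda>t. t *\<^sub>R c)) (at 0)"
      by (simp add: bounded_linear_scaleR_left bounded_linear_imp_has_derivative)
    then have "((\<lambda>t::real. x + t *\<^sub>R c) has_derivative (\<lambda>t. 0 + t *\<^sub>R c)) (at 0)"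
      by (intro has_derivative_add has_derivative_const)
    then show ?thesis by simp
  qed
  have f0: "(f has_derivative f') (at ((\<lambda>t::real. x + t *\<^sub>R c) 0))" using assms by simp
  have "((f \<circ> (\<lambda>t::real. x + t *\<^sub>R c)) has_derivative (f' \<circ> (\<lambda>t. t *\<^sub>R c))) (at 0)"
    by (rule diff_chain_at[OF l f0])
  moreover have "f' \<circ> (\<lambda>t. t *\<^sub>R c) = (\<lambda>t. t *\<^sub>R f' c)"
    using has_derivative_linear[OF assms] by (auto simp: linear_scale)
  ultimately have "((\<lambda>t. f (x + t *\<^sub>R c)) has_vector_derivative f' c) (at 0)"
    unfolding has_vector_derivative_def by (simp add: o_def)
  then show ?thesis unfolding dird_def by (rule vector_derivative_at)
qed

lemma dird_local:
  assumes "open S" "x \<in> S" "\<And>y. y \<in> S \<Longrightarrow> g y = f y" "(g has_derivative g') (at x)"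
  shows "dird f x c = g' c"
  by (rule dird_hasD, rule has_derivative_transform_within_open[OF assms(4,1,2)]) (use assms(3) in auto)

lemma dird_smooth: "smooth_on f S \<Longrightarrow> x \<in> S \<Longrightarrow> dird f x c = DD f x c"
  by (rule dird_hasD[OF smooth_hasD])


lemma minv_unique:
  fixes A B :: "real^'n^'n"
  assumes "A ** B = mat 1" shows "matrix_inv A = B"
proof -
  have BA: "B ** A = mat 1" using assms matrix_left_right_inverse by blast
  have "invertible A" unfolding invertible_def using assms BA by blast
  then have "A ** matrix_inv A = mat 1 \<and> matrix_inv A ** A = mat 1"
    unfolding invertible_def matrix_inv_def by (rule someI_ex)
  then have "B ** (A ** matrix_inv A) = B" by simp
  then show ?thesis by (simp add: matrix_mul_assoc BA)
qed

locale frame =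
  fixes U :: "(real^3) set" and X0 X1 X2 :: "real^3 \<Rightarrow> real^3"
  assumes openU: "open U" and sm0: "smooth_on X0 U" and sm1: "smooth_on X1 U" and sm2: "smooth_on X2 U"
    and inv: "\<And>x. x \<in> U \<Longrightarrow> invertible (frame_mat X0 X1 X2 x)"
begin

definition "dt x = X0 x \<bullet> cross3 (X1 x) (X2 x)"
definition "T0 x = inverse (dt x) *\<^sub>R cross3 (X1 x) (X2 x)"
definition "T1 x = inverse (dt x) *\<^sub>R cross3 (X2 x) (X0 x)"
definition "T2 x = inverse (dt x) *\<^sub>R cross3 (X0 x) (X1 x)"

lemma det_frame: "det (frame_mat X0 X1 X2 x) = dt x"
  unfolding frame_mat_def dt_def by (simp add: det_transpose dot_cross_det)

lemma dt_nz: "x \<in> U \<Longrightarrow> dt x \<noteq> 0"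
  using inv invertible_det_nz det_frame by metis

lemma trip: fixes a b c :: "real^3" shows
  "cross3 b c \<bullet> a = a \<bullet> cross3 b c" "cross3 c a \<bullet> b = a \<bullet> cross3 b c" "cross3 a b \<bullet> c = a \<bullet> cross3 b c"
  "cross3 b c \<bullet> b = 0" "cross3 b c \<bullet> c = 0" "cross3 c a \<bullet> c = 0" "cross3 c a \<bullet> a = 0"
  "cross3 a b \<bullet> a = 0" "cross3 a b \<bullet> b = 0"
  "b \<bullet> cross3 b c = 0" "c \<bullet> cross3 b c = 0" "c \<bullet> cross3 c a = 0" "a \<bullet> cross3 c a = 0"
  "a \<bullet> cross3 a b = 0" "b \<bullet> cross3 a b = 0" "b \<bullet> cross3 c a = a \<bullet> cross3 b c" "c \<bullet> cross3 a b = a \<bullet> cross3 b c"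
  by (simp_all add: cross3_simps)

lemma dual: assumes "x \<in> U" shows
  "T0 x \<bullet> X0 x = 1" "T0 x \<bullet> X1 x = 0" "T0 x \<bullet> X2 x = 0"
  "T1 x \<bullet> X0 x = 0" "T1 x \<bullet> X1 x = 1" "T1 x \<bullet> X2 x = 0"
  "T2 x \<bullet> X0 x = 0" "T2 x \<bullet> X1 x = 0" "T2 x \<bullet> X2 x = 1"
  using dt_nz[OF assms] unfolding T0_def T1_def T2_def dt_def
  by (simp_all add: trip)

definition Hc :: "real^3 \<Rightarrow> real^3^3" where "Hc x = vector [T0 x, T1 x, T2 x]"

lemma Hc_F: assumes "x \<in> U" shows "Hc x ** frame_mat X0 X1 X2 x = mat 1"
proof -
  have "\<And>i j. (Hc x ** frame_mat X0 X1 X2 x) $ i $ j = (Hc x $ i) \<bullet> (vector [X0 x, X1 x, X2 x] $ j)"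
    unfolding frame_mat_def matrix_matrix_mult_def transpose_def inner_vec_def
    by (simp add: mult.commute)
  then show ?thesis
    unfolding Hc_def using dual[OF assms]
    by (simp add: vec_eq_iff forall_3 mat_def)
qed

lemma minv_F: "x \<in> U \<Longrightarrow> matrix_inv (frame_mat X0 X1 X2 x) = Hc x"
  using minv_unique matrix_left_right_inverse Hc_F by metis

lemma F_Hc: "x \<in> U \<Longrightarrow> frame_mat X0 X1 X2 x ** Hc x = mat 1"
  using matrix_left_right_inverse Hc_F by metis

lemma expand: assumes "x \<in> U"
  shows "w = (T0 x \<bullet> w) *\<^sub>R X0 x + (T1 x \<bullet> w) *\<^sub>R X1 x + (T2 x \<bullet> w) *\<^sub>R X2 x"
proof -
  have "w = (frame_mat X0 X1 X2 x ** Hc x) *v w" using F_Hc[OF assms] by simp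
  also have "\<dots> = frame_mat X0 X1 X2 x *v (Hc x *v w)" by (simp add: matrix_vector_mul_assoc)
  also have "\<dots> = (T0 x \<bullet> w) *\<^sub>R X0 x + (T1 x \<bullet> w) *\<^sub>R X1 x + (T2 x \<bullet> w) *\<^sub>R X2 x"
    unfolding frame_mat_def Hc_def
    by (simp add: vec_eq_iff forall_3 matrix_vector_mult_def transpose_def inner_vec_def sum_3 mult.commute)
  finally show ?thesis .
qed

lemma c012: "x \<in> U \<Longrightarrow> c0_12 X0 X1 X2 x = T0 x \<bullet> lie X2 X1 x"
  unfolding c0_12_def minv_F Hc_def
  by (simp add: matrix_vector_mult_def inner_vec_def mult.commute)

lemma smooth_cross: "smooth_on f S \<Longrightarrow> smooth_on g S \<Longrightarrow> smooth_on (\<lambda>x. cross3 (f x) (g x)) S"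
  by (rule smooth_bilinear[OF bilinear_conv_bounded_bilinear[THEN iffD1, OF bilinear_cross]])

lemma smooth_dt: "smooth_on dt U"
  unfolding dt_def by (intro smooth_inner smooth_cross sm0 sm1 sm2)

lemma smooth_T: "smooth_on T0 U" "smooth_on T1 U" "smooth_on T2 U"
  unfolding T0_def T1_def T2_def
  by (intro smooth_scaleR smooth_cross sm0 sm1 sm2 smooth_inverse smooth_dt dt_nz; assumption)+

end

definition outer :: "real^3 \<Rightarrow> real^3 \<Rightarrow> real^3^3" where "outer u v = (\<chi> i j. u$i * v$j)"

lemma outer_mv: "outer u v *v w = (v \<bullet> w) *\<^sub>R u"
  unfolding outer_def by (simp add: vec_eq_iff matrix_vector_mult_def inner_vec_def sum_distrib_left mult.commute mult.left_commute)

lemma inner_outer: "a \<bullet> (outer u v *v w) = (a \<bullet> u) * (v \<bullet> w)"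
  by (simp add: outer_mv)

lemma outer_mm: "outer p q ** outer r t = (q \<bullet> r) *\<^sub>R outer p t"
  unfolding outer_def by (simp add: vec_eq_iff matrix_matrix_mult_def inner_vec_def sum_distrib_left sum_distrib_right mult.commute mult.left_commute)

lemma bilinear_outer: "bilinear outer"
  unfolding bilinear_def linear_iff outer_def by (simp add: vec_eq_iff algebra_simps)

lemma bb_outer: "bounded_bilinear outer"
  using bilinear_conv_bounded_bilinear bilinear_outer by blast

lemma outer_add_left: "outer (u + u') v = outer u v + outer u' v"
  and outer_add_right: "outer u (v + v') = outer u v + outer u v'"
  and outer_scale_left: "outer (c *\<^sub>R u) v = c *\<^sub>R outer u v"
  and outer_scale_right: "outer u (c *\<^sub>R v) = c *\<^sub>R outer u v"
  unfolding outer_def by (simp_all add: vec_eq_iff algebra_simps)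

lemma mm_add_left: "((A::real^3^3) + B) ** C = A ** C + B ** C"
  by (simp add: matrix_matrix_mult_def vec_eq_iff sum.distrib algebra_simps)
lemma mm_scale_left: "(k *\<^sub>R (A::real^3^3)) ** B = k *\<^sub>R (A ** B)"
  by (simp add: matrix_matrix_mult_def vec_eq_iff sum_distrib_left algebra_simps)
lemma mm_scale_right: "(A::real^3^3) ** (k *\<^sub>R B) = k *\<^sub>R (A ** B)"
  by (simp add: matrix_matrix_mult_def vec_eq_iff sum_distrib_left algebra_simps)

context frame begin

definition Gm :: "real \<Rightarrow> real^3 \<Rightarrow> real^3^3" where
  "Gm s x = s *\<^sub>R outer (T0 x) (T0 x) + outer (T1 x) (T1 x) + outer (T2 x) (T2 x)"

lemma g_eps_Gm: assumes "x \<in> U" shows "g_eps \<epsilon> X0 X1 X2 x = Gm (1/\<epsilon>\<^sup>2) x"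
  unfolding g_eps_def minv_F[OF assms] Gm_def Hc_def outer_def
  by (simp add: vec_eq_iff forall_3 matrix_matrix_mult_def transpose_def sum_3 algebra_simps)

lemma sum_outer_id: assumes "x \<in> U"
  shows "outer (T0 x) (X0 x) + outer (T1 x) (X1 x) + outer (T2 x) (X2 x) = mat 1"
proof -
  have "transpose (frame_mat X0 X1 X2 x ** Hc x) = mat 1" using F_Hc[OF assms] by simp
  then show ?thesis
    unfolding frame_mat_def Hc_def outer_def
    by (simp add: vec_eq_iff forall_3 matrix_matrix_mult_def transpose_def sum_3 algebra_simps)
qed

definition Gi :: "real \<Rightarrow> real^3 \<Rightarrow> real^3^3" where
  "Gi s x = inverse s *\<^sub>R outer (X0 x) (X0 x) + outer (X1 x) (X1 x) + outer (X2 x) (X2 x)"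

lemma Gm_Gi: assumes "x \<in> U" "s \<noteq> 0" shows "Gm s x ** Gi s x = mat 1"
proof -
  have "Gm s x ** Gi s x = outer (T0 x) (X0 x) + outer (T1 x) (X1 x) + outer (T2 x) (X2 x)"
    unfolding Gm_def Gi_def
    by (simp add: matrix_add_ldistrib mm_add_left mm_scale_left mm_scale_right outer_mm dual[OF assms(1)] assms(2))
  then show ?thesis using sum_outer_id[OF assms(1)] by simp
qed

lemma minv_G: assumes "x \<in> U" "\<epsilon> \<noteq> 0"
  shows "matrix_inv (g_eps \<epsilon> X0 X1 X2 x) = Gi (1/\<epsilon>\<^sup>2) x"
proof -
  have "1/\<epsilon>\<^sup>2 \<noteq> 0" using assms(2) by simp
  then show ?thesis unfolding g_eps_Gm[OF assms(1)] by (rule minv_unique[OF Gm_Gi[OF assms(1)]])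
qed


lemma mv_scale_left: "(k *\<^sub>R (A::real^3^3)) *v w = k *\<^sub>R (A *v w)"
  by (simp add: scaleR_matrix_vector_assoc)

definition Mf :: "real \<Rightarrow> real^3 \<Rightarrow> real^3 \<Rightarrow> real^3^3" where
 "Mf s x v = s *\<^sub>R (outer (T0 x) (DD T0 x v) + outer (DD T0 x v) (T0 x))
    + (outer (T1 x) (DD T1 x v) + outer (DD T1 x v) (T1 x))
    + (outer (T2 x) (DD T2 x v) + outer (DD T2 x v) (T2 x))"

lemma outer_hasD: assumes "x \<in> U" "smooth_on T U"
  shows "((\<lambda>y. outer (T y) (T y)) has_derivative (\<lambda>v. outer (T x) (DD T x v) + outer (DD T x v) (T x))) (at x)"
  using bounded_bilinear.FDERIV[OF bb_outer smooth_hasD[OF assms(2,1)] smooth_hasD[OF assms(2,1)]] .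

lemma Gm_hasD: assumes "x \<in> U" shows "(Gm s has_derivative Mf s x) (at x)"
proof -
  have e: "Gm s = (\<lambda>y. s *\<^sub>R outer (T0 y) (T0 y) + outer (T1 y) (T1 y) + outer (T2 y) (T2 y))"
    by (rule ext) (simp add: Gm_def)
  have m: "Mf s x = (\<lambda>v. s *\<^sub>R (outer (T0 x) (DD T0 x v) + outer (DD T0 x v) (T0 x))
    + (outer (T1 x) (DD T1 x v) + outer (DD T1 x v) (T1 x))
    + (outer (T2 x) (DD T2 x v) + outer (DD T2 x v) (T2 x)))"
    by (rule ext) (simp add: Mf_def)
  show ?thesis unfolding e m
    by (intro has_derivative_add has_derivative_scaleR_right outer_hasD assms smooth_T)
qed

lemma dird_G: assumes "x \<in> U" shows "dird (g_eps \<epsilon> X0 X1 X2) x v = Mf (1/\<epsilon>\<^sup>2) x v"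
  by (rule dird_local[OF openU assms _ Gm_hasD[OF assms]]) (simp add: g_eps_Gm)

lemma linear_Mf: assumes "x \<in> U"
  shows "Mf s x (v + w) = Mf s x v + Mf s x w" "Mf s x (c *\<^sub>R v) = c *\<^sub>R Mf s x v"
proof -
  have l: "linear (DD T0 x)" "linear (DD T1 x)" "linear (DD T2 x)"
    using linear_DD[OF smooth_T(1) assms] linear_DD[OF smooth_T(2) assms] linear_DD[OF smooth_T(3) assms] .
  show "Mf s x (v + w) = Mf s x v + Mf s x w"
    unfolding Mf_def using l by (simp add: linear_add outer_add_left outer_add_right algebra_simps)
  show "Mf s x (c *\<^sub>R v) = c *\<^sub>R Mf s x v"
    unfolding Mf_def using l by (simp add: linear_scale outer_scale_left outer_scale_right algebra_simps)
qed

definition bet :: "(real^3 \<Rightarrow> real^3) \<Rightarrow> real^3 \<Rightarrow> real^3 \<Rightarrow> real^3 \<Rightarrow> real^3 \<Rightarrow> real" where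
  "bet T x v a w = (a \<bullet> T x) * (DD T x v \<bullet> w) + (a \<bullet> DD T x v) * (T x \<bullet> w)"

lemma inner_Mf: "a \<bullet> (Mf s x v *v w) = s * bet T0 x v a w + bet T1 x v a w + bet T2 x v a w"
  unfolding Mf_def bet_def
  by (simp add: matrix_vector_mult_add_rdistrib mv_scale_left inner_add_right inner_outer algebra_simps)

definition kos :: "(real^3 \<Rightarrow> real^3^3) \<Rightarrow> real^3 \<Rightarrow> real^3 \<Rightarrow> real^3" where
  "kos M a b = (\<chi> k. (a \<bullet> (M b *v axis k 1) + b \<bullet> (M a *v axis k 1) - a \<bullet> (M (axis k 1) *v b)) / 2)"

lemma christ_kos: "christoffel G x a b = matrix_inv (G x) *v kos (dird G x) a b"
  unfolding christoffel_def kos_def ..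

lemma lin3_inner: fixes L :: "real^3 \<Rightarrow> real" assumes "linear L"
  shows "w$1 * L (axis 1 1) + w$2 * L (axis 2 1) + w$3 * L (axis 3 1) = L w"
  using lin3[OF assms, of w] by simp

lemma inner_kos:
  assumes lin: "\<And>v w. M (v + w) = M v + M w" "\<And>c v. M (c *\<^sub>R v) = c *\<^sub>R M v"
  shows "w \<bullet> kos M a b = (a \<bullet> (M b *v w) + b \<bullet> (M a *v w) - a \<bullet> (M w *v b)) / 2"
proof -
  have l1: "linear (\<lambda>w. a \<bullet> (B *v w))" for a and B :: "real^3^3"
    by (rule linearI) (simp_all add: matrix_vector_right_distrib matrix_vector_mult_scaleR inner_add_right)
  have l2: "linear (\<lambda>w. a \<bullet> (M w *v b))"
    by (rule linearI) (simp_all add: lin matrix_vector_mult_add_rdistrib mv_scale_left inner_add_right)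
  have "w \<bullet> kos M a b = (\<Sum>k\<in>UNIV. w$k * ((a \<bullet> (M b *v axis k 1) + b \<bullet> (M a *v axis k 1) - a \<bullet> (M (axis k 1) *v b)) / 2))"
    unfolding kos_def inner_vec_def by simp
  also have "\<dots> = ((w$1 * (a \<bullet> (M b *v axis 1 1)) + w$2 * (a \<bullet> (M b *v axis 2 1)) + w$3 * (a \<bullet> (M b *v axis 3 1)))
      + (w$1 * (b \<bullet> (M a *v axis 1 1)) + w$2 * (b \<bullet> (M a *v axis 2 1)) + w$3 * (b \<bullet> (M a *v axis 3 1)))
      - (w$1 * (a \<bullet> (M (axis 1 1) *v b)) + w$2 * (a \<bullet> (M (axis 2 1) *v b)) + w$3 * (a \<bullet> (M (axis 3 1) *v b)))) / 2"
    by (simp add: sum_3 algebra_simps add_divide_distrib diff_divide_distrib)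
  also have "\<dots> = (a \<bullet> (M b *v w) + b \<bullet> (M a *v w) - a \<bullet> (M w *v b)) / 2"
    by (simp only: lin3_inner[OF l1] lin3_inner[OF l2])
  finally show ?thesis .
qed

lemma Gi_mv: "Gi s x *v z = inverse s *\<^sub>R ((X0 x \<bullet> z) *\<^sub>R X0 x) + (X1 x \<bullet> z) *\<^sub>R X1 x + (X2 x \<bullet> z) *\<^sub>R X2 x"
  unfolding Gi_def by (simp add: matrix_vector_mult_add_rdistrib mv_scale_left outer_mv)

definition Om :: "(real^3 \<Rightarrow> real^3) \<Rightarrow> real^3 \<Rightarrow> real^3 \<Rightarrow> real^3 \<Rightarrow> real" where
  "Om T x u v = DD T x u \<bullet> v - DD T x v \<bullet> u"
definition hh :: "(real^3 \<Rightarrow> real^3) \<Rightarrow> real^3 \<Rightarrow> real^3 \<Rightarrow> real^3 \<Rightarrow> real^3 \<Rightarrow> real" where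
  "hh T x a b w = ((a \<bullet> T x) * Om T x b w + (b \<bullet> T x) * Om T x a w) / 2"
definition SS :: "(real^3 \<Rightarrow> real^3) \<Rightarrow> real^3 \<Rightarrow> real^3 \<Rightarrow> real^3 \<Rightarrow> real" where
  "SS T x a b = (DD T x b \<bullet> a + DD T x a \<bullet> b) / 2"

lemma bet_comb: "(bet T x b a w + bet T x a b w - bet T x w a b) / 2 = (T x \<bullet> w) * SS T x a b + hh T x a b w"
  unfolding bet_def SS_def hh_def Om_def by (simp add: algebra_simps inner_commute add_divide_distrib diff_divide_distrib)

definition Pc :: "real^3 \<Rightarrow> real^3 \<Rightarrow> real^3 \<Rightarrow> real^3" where
  "Pc x a b = hh T0 x a b (X1 x) *\<^sub>R X1 x + hh T0 x a b (X2 x) *\<^sub>R X2 x"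
definition Qc :: "real^3 \<Rightarrow> real^3 \<Rightarrow> real^3 \<Rightarrow> real^3" where
  "Qc x a b = (hh T1 x a b (X0 x) + hh T2 x a b (X0 x)) *\<^sub>R X0 x"
definition G0 :: "real^3 \<Rightarrow> real^3 \<Rightarrow> real^3 \<Rightarrow> real^3" where
  "G0 x a b = (SS T0 x a b + hh T0 x a b (X0 x)) *\<^sub>R X0 x
     + (SS T1 x a b + hh T1 x a b (X1 x) + hh T2 x a b (X1 x)) *\<^sub>R X1 x
     + (SS T2 x a b + hh T1 x a b (X2 x) + hh T2 x a b (X2 x)) *\<^sub>R X2 x"

lemma christ_formula: assumes "x \<in> U" "\<epsilon> \<noteq> 0"
  shows "christoffel (g_eps \<epsilon> X0 X1 X2) x a b
    = (1/\<epsilon>\<^sup>2) *\<^sub>R Pc x a b + G0 x a b + \<epsilon>\<^sup>2 *\<^sub>R Qc x a b"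
proof -
  define s where "s = 1/\<epsilon>\<^sup>2"
  have s0: "s \<noteq> 0" using assms(2) by (simp add: s_def)
  have si: "\<And>y. s * (inverse s * y) = y" using s0 by (simp add: mult.assoc[symmetric])
  have iv: "inverse s = \<epsilon>\<^sup>2" by (simp add: s_def)
  have dG: "dird (g_eps \<epsilon> X0 X1 X2) x = Mf s x" using dird_G[OF assms(1)] s_def by auto
  have ik: "\<And>w. w \<bullet> kos (Mf s x) a b =
     s * ((T0 x \<bullet> w) * SS T0 x a b + hh T0 x a b w) + ((T1 x \<bullet> w) * SS T1 x a b + hh T1 x a b w)
     + ((T2 x \<bullet> w) * SS T2 x a b + hh T2 x a b w)"
  proof -
    fix w
    have "w \<bullet> kos (Mf s x) a b = (a \<bullet> (Mf s x b *v w) + b \<bullet> (Mf s x a *v w) - a \<bullet> (Mf s x w *v b)) / 2"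
      by (rule inner_kos) (simp_all add: linear_Mf[OF assms(1)])
    also have "\<dots> = s * ((bet T0 x b a w + bet T0 x a b w - bet T0 x w a b) / 2)
       + (bet T1 x b a w + bet T1 x a b w - bet T1 x w a b) / 2
       + (bet T2 x b a w + bet T2 x a b w - bet T2 x w a b) / 2"
      unfolding inner_Mf by (simp add: algebra_simps add_divide_distrib diff_divide_distrib)
    finally show "w \<bullet> kos (Mf s x) a b =
     s * ((T0 x \<bullet> w) * SS T0 x a b + hh T0 x a b w) + ((T1 x \<bullet> w) * SS T1 x a b + hh T1 x a b w)
     + ((T2 x \<bullet> w) * SS T2 x a b + hh T2 x a b w)" by (simp only: bet_comb)
  qed
  have "christoffel (g_eps \<epsilon> X0 X1 X2) x a b = Gi s x *v kos (Mf s x) a b"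
    unfolding christ_kos dG minv_G[OF assms] s_def ..
  also have "\<dots> = s *\<^sub>R Pc x a b + G0 x a b + inverse s *\<^sub>R Qc x a b"
    unfolding Gi_mv ik Pc_def Qc_def G0_def using s0
    using s0 by (simp add: dual[OF assms(1)] algebra_simps si)
  finally show ?thesis unfolding s_def iv[unfolded s_def] .
qed


lemma ip_formula: assumes "x \<in> U"
  shows "ip (g_eps \<epsilon> X0 X1 X2) x u w = (1/\<epsilon>\<^sup>2) * ((u \<bullet> T0 x) * (T0 x \<bullet> w)) + (u \<bullet> T1 x) * (T1 x \<bullet> w) + (u \<bullet> T2 x) * (T2 x \<bullet> w)"
  unfolding ip_def g_eps_Gm[OF assms] Gm_def
  by (simp add: matrix_vector_mult_add_rdistrib mv_scale_left inner_add_right inner_outer)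

end

lemma smooth_div2: "smooth_on f S \<Longrightarrow> smooth_on (\<lambda>x. f x / (2::real)) S"
  by (rule smooth_linear[OF bounded_linear_divide])

context frame begin

lemma sm_DDa: "smooth_on T U \<Longrightarrow> smooth_on A U \<Longrightarrow> smooth_on (\<lambda>x. DD T x (A x)) U"
  by (rule smooth_DD_apply[OF openU])

lemma sm_Om: assumes "smooth_on T U" "smooth_on A U" "smooth_on B U"
  shows "smooth_on (\<lambda>x. Om T x (A x) (B x)) U"
  unfolding Om_def
  by (rule smooth_diff; rule smooth_inner; (rule sm_DDa)?; fact)

lemma sm_hh: assumes "smooth_on T U" "smooth_on A U" "smooth_on B U" "smooth_on C U"
  shows "smooth_on (\<lambda>x. hh T x (A x) (B x) (C x)) U"
  unfolding hh_def
  by (rule smooth_div2, rule smooth_add; rule smooth_mult; (rule smooth_inner | rule sm_Om); fact)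

lemma sm_SS: assumes "smooth_on T U" "smooth_on A U" "smooth_on B U"
  shows "smooth_on (\<lambda>x. SS T x (A x) (B x)) U"
  unfolding SS_def
  by (rule smooth_div2, rule smooth_add; rule smooth_inner; (rule sm_DDa)?; fact)

lemmas smT = smooth_T sm0 sm1 sm2

lemma sm_Pc: assumes "smooth_on A U" "smooth_on B U"
  shows "smooth_on (\<lambda>x. Pc x (A x) (B x)) U"
  unfolding Pc_def
  by (rule smooth_add; rule smooth_scaleR; (rule sm_hh)?; (rule assms smT)+)

lemma sm_Qc: assumes "smooth_on A U" "smooth_on B U"
  shows "smooth_on (\<lambda>x. Qc x (A x) (B x)) U"
  unfolding Qc_def
  by (rule smooth_scaleR; (rule smooth_add)?; (rule sm_hh)?; (rule assms smT)+)

lemma sm_G0: assumes "smooth_on A U" "smooth_on B U"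
  shows "smooth_on (\<lambda>x. G0 x (A x) (B x)) U"
  unfolding G0_def
  by (intro smooth_add smooth_scaleR sm_hh sm_SS assms smT)


lemma linDD: "x \<in> U \<Longrightarrow> linear (DD T0 x)" "x \<in> U \<Longrightarrow> linear (DD T1 x)" "x \<in> U \<Longrightarrow> linear (DD T2 x)"
  using linear_DD smooth_T by blast+

lemma Om_lin: assumes "linear (DD T x)"
  shows "Om T x (u + u') v = Om T x u v + Om T x u' v" "Om T x (c *\<^sub>R u) v = c * Om T x u v"
        "Om T x u (v + v') = Om T x u v + Om T x u v'" "Om T x u (c *\<^sub>R v) = c * Om T x u v"
  unfolding Om_def using assms by (simp_all add: linear_add linear_scale inner_add_left inner_add_right algebra_simps)

lemma SS_lin: assumes "linear (DD T x)"
  shows "SS T x u (v + v') = SS T x u v + SS T x u v'" "SS T x u (c *\<^sub>R v) = c * SS T x u v"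
  unfolding SS_def using assms by (simp_all add: linear_add linear_scale inner_add_left inner_add_right algebra_simps add_divide_distrib)

lemma hh_lin: assumes "linear (DD T x)"
  shows "hh T x u (v + v') w = hh T x u v w + hh T x u v' w" "hh T x u (c *\<^sub>R v) w = c * hh T x u v w"
        "hh T x u v (w + w') = hh T x u v w + hh T x u v w'" "hh T x u v (c *\<^sub>R w) = c * hh T x u v w"
  unfolding hh_def using Om_lin[OF assms] by (simp_all add: inner_add_left algebra_simps add_divide_distrib)

lemma Pc_lin: assumes "x \<in> U"
  shows "Pc x u (v + v') = Pc x u v + Pc x u v'" "Pc x u (c *\<^sub>R v) = c *\<^sub>R Pc x u v"
  unfolding Pc_def using hh_lin[OF linDD(1)[OF assms]] by (simp_all add: algebra_simps)

lemma Qc_lin: assumes "x \<in> U"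
  shows "Qc x u (v + v') = Qc x u v + Qc x u v'" "Qc x u (c *\<^sub>R v) = c *\<^sub>R Qc x u v"
  unfolding Qc_def using hh_lin[OF linDD(2)[OF assms]] hh_lin[OF linDD(3)[OF assms]] by (simp_all add: algebra_simps)

lemma G0_lin: assumes "x \<in> U"
  shows "G0 x u (v + v') = G0 x u v + G0 x u v'" "G0 x u (c *\<^sub>R v) = c *\<^sub>R G0 x u v"
  unfolding G0_def using hh_lin[OF linDD(1)[OF assms]] hh_lin[OF linDD(2)[OF assms]] hh_lin[OF linDD(3)[OF assms]]
    SS_lin[OF linDD(1)[OF assms]] SS_lin[OF linDD(2)[OF assms]] SS_lin[OF linDD(3)[OF assms]]
  by (simp_all add: algebra_simps)

lemma nabla_single: assumes "p \<in> U" "\<epsilon> \<noteq> 0" "smooth_on C U"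
  shows "nabla (g_eps \<epsilon> X0 X1 X2) L C p = DD C p (L p) + (1/\<epsilon>\<^sup>2) *\<^sub>R Pc p (L p) (C p) + G0 p (L p) (C p) + \<epsilon>\<^sup>2 *\<^sub>R Qc p (L p) (C p)"
  unfolding nabla_def dird_smooth[OF assms(3,1)] christ_formula[OF assms(1,2)] by simp

lemma nabla_field: assumes "x \<in> U" "\<epsilon> \<noteq> 0" "smooth_on C U"
  shows "nabla (g_eps \<epsilon> X0 X1 X2) B C x = (DD C x (B x) + G0 x (B x) (C x)) + (1/\<epsilon>\<^sup>2) *\<^sub>R Pc x (B x) (C x) + \<epsilon>\<^sup>2 *\<^sub>R Qc x (B x) (C x)"
  unfolding nabla_def dird_smooth[OF assms(3,1)] christ_formula[OF assms(1,2)] by simp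

lemma nabla2: assumes "p \<in> U" "\<epsilon> \<noteq> 0" "smooth_on A U" "smooth_on B U" "smooth_on C U"
  shows "nabla (g_eps \<epsilon> X0 X1 X2) A (nabla (g_eps \<epsilon> X0 X1 X2) B C) p
    = DD (\<lambda>x. DD C x (B x) + G0 x (B x) (C x)) p (A p) + (1/\<epsilon>\<^sup>2) *\<^sub>R DD (\<lambda>x. Pc x (B x) (C x)) p (A p)
      + \<epsilon>\<^sup>2 *\<^sub>R DD (\<lambda>x. Qc x (B x) (C x)) p (A p)
      + christoffel (g_eps \<epsilon> X0 X1 X2) p (A p) (nabla (g_eps \<epsilon> X0 X1 X2) B C p)"
proof -
  let ?W0 = "\<lambda>x. DD C x (B x) + G0 x (B x) (C x)"
  let ?P = "\<lambda>x. Pc x (B x) (C x)"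
  let ?Q = "\<lambda>x. Qc x (B x) (C x)"
  have s1: "smooth_on ?W0 U" by (intro smooth_add sm_DDa sm_G0 assms)
  have s2: "smooth_on ?P U" by (intro sm_Pc assms)
  have s3: "smooth_on ?Q U" by (intro sm_Qc assms)
  have hd: "((\<lambda>x. ?W0 x + (1/\<epsilon>\<^sup>2) *\<^sub>R ?P x + \<epsilon>\<^sup>2 *\<^sub>R ?Q x) has_derivative
     (\<lambda>v. DD ?W0 p v + (1/\<epsilon>\<^sup>2) *\<^sub>R DD ?P p v + \<epsilon>\<^sup>2 *\<^sub>R DD ?Q p v)) (at p)"
    by (intro has_derivative_add has_derivative_scaleR_right smooth_hasD[OF s1 assms(1)]
          smooth_hasD[OF s2 assms(1)] smooth_hasD[OF s3 assms(1)])
  have "dird (nabla (g_eps \<epsilon> X0 X1 X2) B C) p (A p) = DD ?W0 p (A p) + (1/\<epsilon>\<^sup>2) *\<^sub>R DD ?P p (A p) + \<epsilon>\<^sup>2 *\<^sub>R DD ?Q p (A p)"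
    by (rule dird_local[OF openU assms(1) _ hd]) (simp add: nabla_field assms)
  then show ?thesis unfolding nabla_def[of _ A] by simp
qed

lemma nabla2_exp: assumes "p \<in> U" "smooth_on A U" "smooth_on B U" "smooth_on C U" "Pc p (B p) (C p) = 0"
  shows "\<exists>c0 c1 c2. \<forall>\<epsilon>. \<epsilon> \<noteq> 0 \<longrightarrow> nabla (g_eps \<epsilon> X0 X1 X2) A (nabla (g_eps \<epsilon> X0 X1 X2) B C) p
    = (1/\<epsilon>\<^sup>2) *\<^sub>R (DD (\<lambda>x. Pc x (B x) (C x)) p (A p) + Pc p (A p) (DD C p (B p) + G0 p (B p) (C p)))
      + c0 + \<epsilon>\<^sup>2 *\<^sub>R c1 + (\<epsilon>\<^sup>2)\<^sup>2 *\<^sub>R c2"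
proof (intro exI allI impI)
  fix \<epsilon> :: real assume e: "\<epsilon> \<noteq> 0"
  let ?W0 = "\<lambda>x. DD C x (B x) + G0 x (B x) (C x)"
  let ?P = "\<lambda>x. Pc x (B x) (C x)"
  let ?Q = "\<lambda>x. Qc x (B x) (C x)"
  define u where "u = A p"
  define w0 where "w0 = ?W0 p"
  define q where "q = ?Q p"
  have st: "(1/\<epsilon>\<^sup>2) * \<epsilon>\<^sup>2 = 1" using e by simp
  have nw: "nabla (g_eps \<epsilon> X0 X1 X2) B C p = w0 + \<epsilon>\<^sup>2 *\<^sub>R q"
    unfolding w0_def q_def nabla_field[OF assms(1) e assms(4)] assms(5) by simp
  show "nabla (g_eps \<epsilon> X0 X1 X2) A (nabla (g_eps \<epsilon> X0 X1 X2) B C) p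
    = (1/\<epsilon>\<^sup>2) *\<^sub>R (DD ?P p (A p) + Pc p (A p) (DD C p (B p) + G0 p (B p) (C p)))
      + (DD ?W0 p u + Pc p u q + G0 p u w0) + \<epsilon>\<^sup>2 *\<^sub>R (DD ?Q p u + G0 p u q + Qc p u w0) + (\<epsilon>\<^sup>2)\<^sup>2 *\<^sub>R Qc p u q"
    unfolding nabla2[OF assms(1) e assms(2-4)] nw christ_formula[OF assms(1) e]
      Pc_lin[OF assms(1)] Qc_lin[OF assms(1)] G0_lin[OF assms(1)] u_def[symmetric] w0_def[symmetric]
    using e by (simp add: algebra_simps st power2_eq_square)
qed

end

context frame begin

lemma DD_local: assumes "p \<in> U" "\<And>x. x \<in> U \<Longrightarrow> g x = f x" "(g has_derivative g') (at p)"
  shows "DD f p = g'"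
proof -
  have "(f has_derivative g') (at p)"
    by (rule has_derivative_transform_within_open[OF assms(3) openU assms(1)]) (use assms(2) in auto)
  then show ?thesis unfolding DD_def by (metis frechet_derivative_at)
qed

definition ZZ :: "real^3 \<Rightarrow> real^3 \<Rightarrow> real^3" where
  "ZZ x V = Om T0 x V (X1 x) *\<^sub>R X1 x + Om T0 x V (X2 x) *\<^sub>R X2 x"

lemma sm_ZZ: "smooth_on B U \<Longrightarrow> smooth_on (\<lambda>x. ZZ x (B x)) U"
  unfolding ZZ_def by (intro smooth_add smooth_scaleR sm_Om smT; assumption?)

lemma Pc_split: "Pc x B C = (1/2) *\<^sub>R ((B \<bullet> T0 x) *\<^sub>R ZZ x C + (C \<bullet> T0 x) *\<^sub>R ZZ x B)"
  unfolding Pc_def hh_def ZZ_def by (simp add: algebra_simps add_divide_distrib)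

lemma DPc: assumes "p \<in> U" "smooth_on B U" "smooth_on C U" "B p \<bullet> T0 p = 0" "C p \<bullet> T0 p = 0"
  shows "DD (\<lambda>x. Pc x (B x) (C x)) p u = (1/2) *\<^sub>R ((DD B p u \<bullet> T0 p + B p \<bullet> DD T0 p u) *\<^sub>R ZZ p (C p)
      + (DD C p u \<bullet> T0 p + C p \<bullet> DD T0 p u) *\<^sub>R ZZ p (B p))"
proof -
  have hT: "(T0 has_derivative DD T0 p) (at p)" by (rule smooth_hasD[OF smooth_T(1) assms(1)])
  have hB: "(B has_derivative DD B p) (at p)" by (rule smooth_hasD[OF assms(2,1)])
  have hC: "(C has_derivative DD C p) (at p)" by (rule smooth_hasD[OF assms(3,1)])
  have zB: "((\<lambda>x. ZZ x (B x)) has_derivative DD (\<lambda>x. ZZ x (B x)) p) (at p)"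
    by (rule smooth_hasD[OF sm_ZZ[OF assms(2)] assms(1)])
  have zC: "((\<lambda>x. ZZ x (C x)) has_derivative DD (\<lambda>x. ZZ x (C x)) p) (at p)"
    by (rule smooth_hasD[OF sm_ZZ[OF assms(3)] assms(1)])
  have iB: "((\<lambda>x. B x \<bullet> T0 x) has_derivative (\<lambda>h. B p \<bullet> DD T0 p h + DD B p h \<bullet> T0 p)) (at p)"
    by (rule bounded_bilinear.FDERIV[OF bounded_bilinear_inner hB hT])
  have iC: "((\<lambda>x. C x \<bullet> T0 x) has_derivative (\<lambda>h. C p \<bullet> DD T0 p h + DD C p h \<bullet> T0 p)) (at p)"
    by (rule bounded_bilinear.FDERIV[OF bounded_bilinear_inner hC hT])
  note h1 = bounded_bilinear.FDERIV[OF bounded_bilinear_scaleR iB zC]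
  note h2 = bounded_bilinear.FDERIV[OF bounded_bilinear_scaleR iC zB]
  note h = has_derivative_scaleR_right[OF has_derivative_add[OF h1 h2], of "1/2"]
  have eq: "\<And>x. x \<in> U \<Longrightarrow> (1/2) *\<^sub>R ((B x \<bullet> T0 x) *\<^sub>R ZZ x (C x) + (C x \<bullet> T0 x) *\<^sub>R ZZ x (B x)) = Pc x (B x) (C x)"
    by (simp add: Pc_split)
  note d = DD_local[OF assms(1) eq h]
  show ?thesis using assms(4,5) by (simp add: d algebra_simps)
qed


lemma Om_self: "Om T x u u = 0"
  unfolding Om_def by simp

lemma Om_anti: "Om T x u v = - Om T x v u"
  unfolding Om_def by simp

end

locale cfg = frame +
  fixes X Y :: "real^3 \<Rightarrow> real^3" and p :: "real^3"
  assumes smX: "smooth_on X U" and smY: "smooth_on Y U" and pU: "p \<in> U"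
    and hX: "X p \<bullet> T0 p = 0" and hY: "Y p \<bullet> T0 p = 0"
begin

definition ell :: "real^3 \<Rightarrow> real" where
  "ell w = (w \<bullet> T1 p) * (T1 p \<bullet> X p) + (w \<bullet> T2 p) * (T2 p \<bullet> X p)"

lemma ip_ell: "ip (g_eps \<epsilon> X0 X1 X2) p w (X p) = ell w"
  unfolding ip_formula[OF pU] ell_def using hX by (simp add: inner_commute)

lemma ell_lin: "ell (u + v) = ell u + ell v" "ell (c *\<^sub>R u) = c * ell u" "ell (u - v) = ell u - ell v"
  unfolding ell_def by (simp_all add: inner_add_left inner_diff_left algebra_simps)

lemma a_exp: "X p = (T1 p \<bullet> X p) *\<^sub>R X1 p + (T2 p \<bullet> X p) *\<^sub>R X2 p"
  using expand[OF pU, of "X p"] hX by (simp add: inner_commute)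

lemma ell_ZZ: "ell (ZZ p V) = Om T0 p V (X p)"
proof -
  have "Om T0 p V (X p) = Om T0 p V ((T1 p \<bullet> X p) *\<^sub>R X1 p + (T2 p \<bullet> X p) *\<^sub>R X2 p)"
    using a_exp by simp
  also have "\<dots> = (T1 p \<bullet> X p) * Om T0 p V (X1 p) + (T2 p \<bullet> X p) * Om T0 p V (X2 p)"
    using Om_lin[OF linDD(1)[OF pU]] by simp
  finally show ?thesis
    unfolding ell_def ZZ_def using dual[OF pU]
    by (simp add: inner_add_left inner_commute algebra_simps)
qed

lemma ell_Pc: "ell (Pc p u v) = ((u \<bullet> T0 p) * Om T0 p v (X p) + (v \<bullet> T0 p) * Om T0 p u (X p)) / 2"
  unfolding Pc_split ell_lin ell_ZZ by (simp add: algebra_simps add_divide_distrib)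

lemma dual': "X0 p \<bullet> T0 p = 1" "X1 p \<bullet> T0 p = 0" "X2 p \<bullet> T0 p = 0"
  using dual[OF pU] by (simp_all add: inner_commute)

lemma G0_T0: "G0 p u v \<bullet> T0 p = SS T0 p u v + hh T0 p u v (X0 p)"
  unfolding G0_def inner_add_left inner_scaleR_left dual' by simp

lemma Pc_YY: "Pc p (Y p) (Y p) = 0" and Pc_XY: "Pc p (X p) (Y p) = 0"
  unfolding Pc_split using hX hY by simp_all

definition Rv :: "real \<Rightarrow> real^3" where
  "Rv \<epsilon> = nabla (g_eps \<epsilon> X0 X1 X2) X (nabla (g_eps \<epsilon> X0 X1 X2) Y Y) p
     - nabla (g_eps \<epsilon> X0 X1 X2) Y (nabla (g_eps \<epsilon> X0 X1 X2) X Y) p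
     - nabla (g_eps \<epsilon> X0 X1 X2) (lie X Y) Y p"

definition VV :: "real^3" where
  "VV = (DD (\<lambda>x. Pc x (Y x) (Y x)) p (X p) + Pc p (X p) (DD Y p (Y p) + G0 p (Y p) (Y p)))
      - (DD (\<lambda>x. Pc x (X x) (Y x)) p (Y p) + Pc p (Y p) (DD Y p (X p) + G0 p (X p) (Y p)))
      - Pc p (lie X Y p) (Y p)"

lemma R_exp: "\<exists>c0 c1 c2. \<forall>\<epsilon>. \<epsilon> \<noteq> 0 \<longrightarrow> Rv \<epsilon> = (1/\<epsilon>\<^sup>2) *\<^sub>R VV + c0 + \<epsilon>\<^sup>2 *\<^sub>R c1 + (\<epsilon>\<^sup>2)\<^sup>2 *\<^sub>R c2"
proof -
  obtain c0 c1 c2 where e1: "\<forall>\<epsilon>. \<epsilon> \<noteq> 0 \<longrightarrow> nabla (g_eps \<epsilon> X0 X1 X2) X (nabla (g_eps \<epsilon> X0 X1 X2) Y Y) p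
    = (1/\<epsilon>\<^sup>2) *\<^sub>R (DD (\<lambda>x. Pc x (Y x) (Y x)) p (X p) + Pc p (X p) (DD Y p (Y p) + G0 p (Y p) (Y p)))
      + c0 + \<epsilon>\<^sup>2 *\<^sub>R c1 + (\<epsilon>\<^sup>2)\<^sup>2 *\<^sub>R c2"
    using nabla2_exp[OF pU smX smY smY Pc_YY] by blast
  obtain d0 d1 d2 where e2: "\<forall>\<epsilon>. \<epsilon> \<noteq> 0 \<longrightarrow> nabla (g_eps \<epsilon> X0 X1 X2) Y (nabla (g_eps \<epsilon> X0 X1 X2) X Y) p
    = (1/\<epsilon>\<^sup>2) *\<^sub>R (DD (\<lambda>x. Pc x (X x) (Y x)) p (Y p) + Pc p (Y p) (DD Y p (X p) + G0 p (X p) (Y p)))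
      + d0 + \<epsilon>\<^sup>2 *\<^sub>R d1 + (\<epsilon>\<^sup>2)\<^sup>2 *\<^sub>R d2"
    using nabla2_exp[OF pU smY smX smY Pc_XY] by blast
  show ?thesis
  proof (intro exI allI impI)
    fix \<epsilon> :: real assume e: "\<epsilon> \<noteq> 0"
    show "Rv \<epsilon> = (1/\<epsilon>\<^sup>2) *\<^sub>R VV + (c0 - d0 - (DD Y p (lie X Y p) + G0 p (lie X Y p) (Y p)))
       + \<epsilon>\<^sup>2 *\<^sub>R (c1 - d1 - Qc p (lie X Y p) (Y p)) + (\<epsilon>\<^sup>2)\<^sup>2 *\<^sub>R (c2 - d2)"
      unfolding Rv_def VV_def e1[rule_format, OF e] e2[rule_format, OF e] nabla_single[OF pU e smY]
      by (simp add: algebra_simps)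
  qed
qed


lemma ellVV: "ell VV = - 3/4 * (Om T0 p (X p) (Y p))\<^sup>2"
proof -
  define al where "al = DD T0 p (X p) \<bullet> Y p"
  define be where "be = DD T0 p (Y p) \<bullet> X p"
  define ya where "ya = DD Y p (X p) \<bullet> T0 p"
  define xb where "xb = DD X p (Y p) \<bullet> T0 p"
  have Oba: "Om T0 p (Y p) (X p) = be - al" unfolding Om_def al_def be_def ..
  have Oab: "Om T0 p (X p) (Y p) = al - be" unfolding Om_def al_def be_def ..
  have Oaa: "Om T0 p (X p) (X p) = 0" by (rule Om_self)
  have t1: "ell (DD (\<lambda>x. Pc x (Y x) (Y x)) p (X p)) = (ya + al) * (be - al)"
    unfolding DPc[OF pU smY smY hY hY] ell_lin ell_ZZ Oba
    by (simp add: ya_def al_def inner_commute algebra_simps)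
  have t2: "ell (Pc p (X p) (DD Y p (Y p) + G0 p (Y p) (Y p))) = 0"
    unfolding ell_Pc hX Oaa by simp
  have t3: "ell (DD (\<lambda>x. Pc x (X x) (Y x)) p (Y p)) = (xb + be) * (be - al) / 2"
    unfolding DPc[OF pU smX smY hX hY] ell_lin ell_ZZ Oba Oaa
    by (simp add: xb_def be_def inner_commute algebra_simps)
  have hh0: "hh T0 p (X p) (Y p) (X0 p) = 0" unfolding hh_def hX hY by simp
  have w: "(DD Y p (X p) + G0 p (X p) (Y p)) \<bullet> T0 p = ya + (be + al) / 2"
    unfolding inner_add_left G0_T0 hh0 SS_def ya_def al_def be_def by (simp add: inner_commute)
  have t4: "ell (Pc p (Y p) (DD Y p (X p) + G0 p (X p) (Y p))) = (ya + (be + al) / 2) * (be - al) / 2"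
    unfolding ell_Pc hY w Oba by simp
  have l: "lie X Y p = DD Y p (X p) - DD X p (Y p)"
    unfolding lie_def dird_smooth[OF smY pU] dird_smooth[OF smX pU] ..
  have t5: "ell (Pc p (lie X Y p) (Y p)) = (ya - xb) * (be - al) / 2"
    unfolding ell_Pc hY l Oba by (simp add: inner_diff_left ya_def xb_def)
  show ?thesis unfolding VV_def ell_lin t1 t2 t3 t4 t5 Oab
    by (simp add: power2_eq_square algebra_simps) (simp add: field_simps)
qed


lemma b_exp: "Y p = (T1 p \<bullet> Y p) *\<^sub>R X1 p + (T2 p \<bullet> Y p) *\<^sub>R X2 p"
  using expand[OF pU, of "Y p"] hY by (simp add: inner_commute)

lemma Om_ab: "Om T0 p (X p) (Y p) = ((T1 p \<bullet> X p) * (T2 p \<bullet> Y p) - (T2 p \<bullet> X p) * (T1 p \<bullet> Y p)) * Om T0 p (X1 p) (X2 p)"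
proof -
  have "Om T0 p (X p) (Y p) = Om T0 p ((T1 p \<bullet> X p) *\<^sub>R X1 p + (T2 p \<bullet> X p) *\<^sub>R X2 p) ((T1 p \<bullet> Y p) *\<^sub>R X1 p + (T2 p \<bullet> Y p) *\<^sub>R X2 p)"
    using a_exp b_exp by simp
  also have "\<dots> = ((T1 p \<bullet> X p) * (T2 p \<bullet> Y p) - (T2 p \<bullet> X p) * (T1 p \<bullet> Y p)) * Om T0 p (X1 p) (X2 p)"
    using Om_lin[OF linDD(1)[OF pU]] Om_self[of T0 p] Om_anti[of T0 p "X2 p" "X1 p"]
    by (simp add: algebra_simps)
  finally show ?thesis .
qed

lemma ip_XX: "ip (g_eps \<epsilon> X0 X1 X2) p (X p) (X p) = (T1 p \<bullet> X p)\<^sup>2 + (T2 p \<bullet> X p)\<^sup>2"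
  and ip_YY: "ip (g_eps \<epsilon> X0 X1 X2) p (Y p) (Y p) = (T1 p \<bullet> Y p)\<^sup>2 + (T2 p \<bullet> Y p)\<^sup>2"
  and ip_XY: "ip (g_eps \<epsilon> X0 X1 X2) p (X p) (Y p) = (T1 p \<bullet> X p) * (T1 p \<bullet> Y p) + (T2 p \<bullet> X p) * (T2 p \<bullet> Y p)"
  unfolding ip_formula[OF pU] using hX hY by (simp_all add: inner_commute power2_eq_square)

end

context frame begin

lemma deriv_zero: assumes "p \<in> U" "smooth_on A U" "smooth_on B U" "\<And>x. x \<in> U \<Longrightarrow> A x \<bullet> B x = 0"
  shows "A p \<bullet> DD B p h + DD A p h \<bullet> B p = 0"
proof -
  have d1: "((\<lambda>x. A x \<bullet> B x) has_derivative (\<lambda>h. A p \<bullet> DD B p h + DD A p h \<bullet> B p)) (at p)"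
    by (rule bounded_bilinear.FDERIV[OF bounded_bilinear_inner smooth_hasD[OF assms(2,1)] smooth_hasD[OF assms(3,1)]])
  have d2: "((\<lambda>x. A x \<bullet> B x) has_derivative (\<lambda>h. 0)) (at p)"
    by (rule has_derivative_transform_within_open[OF has_derivative_const openU assms(1)]) (simp add: assms(4))
  have "(\<lambda>h. A p \<bullet> DD B p h + DD A p h \<bullet> B p) = (\<lambda>h. 0)" by (rule has_derivative_unique[OF d1 d2])
  then show ?thesis by metis
qed

lemma Om_c: assumes "p \<in> U" shows "Om T0 p (X1 p) (X2 p) = c0_12 X0 X1 X2 p"
proof -
  have z1: "X2 p \<bullet> DD T0 p (X1 p) + DD X2 p (X1 p) \<bullet> T0 p = 0"
    by (rule deriv_zero[OF assms sm2 smooth_T(1)]) (metis dual(3) inner_commute)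
  have z2: "X1 p \<bullet> DD T0 p (X2 p) + DD X1 p (X2 p) \<bullet> T0 p = 0"
    by (rule deriv_zero[OF assms sm1 smooth_T(1)]) (metis dual(2) inner_commute)
  have "c0_12 X0 X1 X2 p = T0 p \<bullet> (DD X1 p (X2 p) - DD X2 p (X1 p))"
    unfolding c012[OF assms] lie_def dird_smooth[OF sm1 assms] dird_smooth[OF sm2 assms] ..
  then show ?thesis unfolding Om_def using z1 z2 by (simp add: inner_diff_right inner_commute)
qed

end

lemma span2_ex: fixes u w v :: "real^3" assumes "v \<in> span {u, w}" shows "\<exists>k1 k2. v = k1 *\<^sub>R u + k2 *\<^sub>R w"
  using assms unfolding span_insert[of u] span_singleton by (auto, metis add.commute diff_eq_eq)

lemma indep2: fixes u w :: "real^3" assumes "independent {u, w}" "u \<noteq> w" "k1 *\<^sub>R u + k2 *\<^sub>R w = 0"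
  shows "k1 = 0"
proof (rule ccontr)
  assume k: "k1 \<noteq> 0"
  have "u = (- k2 / k1) *\<^sub>R w" using assms(3) k
    by (metis eq_neg_iff_add_eq_0 scaleR_minus_left vector_fraction_eq_iff)
  then have "u \<in> span {w}" by (metis span_base span_scale singletonI)
  then have "u \<in> span ({u, w} - {u})" using assms(2) by (simp add: insert_Diff_if)
  then have "dependent {u, w}" unfolding dependent_def by blast
  then show False using assms(1) by simp
qed

theorem lemma3p2:
  fixes U S :: "(real^3) set" and p :: "real^3"
    and X0 X1 X2 X Y :: "real^3 \<Rightarrow> real^3"
  assumes "open U" and "p \<in> U"
    and "smooth_on X0 U" and "smooth_on X1 U" and "smooth_on X2 U"
    and "\<And>x. x \<in> U \<Longrightarrow> invertible (frame_mat X0 X1 X2 x)"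
    and "\<And>x. x \<in> U \<Longrightarrow> c0_12 X0 X1 X2 x \<noteq> 0"
    and "embedded_C2_surface S" and "p \<in> S"
    and "tangent_space S p = span {X1 p, X2 p}"
    and "smooth_on X U" and "smooth_on Y U"
    and "independent {X p, Y p}" and "X p \<noteq> Y p"
    and "span {X p, Y p} = tangent_space S p"
  shows "(\<lambda>\<epsilon>. K_ext (g_eps \<epsilon> X0 X1 X2) X Y p + 3 / (4 * \<epsilon>\<^sup>2) * (c0_12 X0 X1 X2 p)\<^sup>2)
           \<in> O[at_right 0](\<lambda>_. 1)"
proof -
  interpret fr: frame U X0 X1 X2
    by unfold_locales (use assms in auto)
  have sp: "span {X p, Y p} = span {X1 p, X2 p}" using assms(10,15) by simp
  have "X p \<in> span {X1 p, X2 p}" using sp span_base[of "X p" "{X p, Y p}"] by auto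
  then obtain k1 k2 where kX: "X p = k1 *\<^sub>R X1 p + k2 *\<^sub>R X2 p" using span2_ex by blast
  have "Y p \<in> span {X1 p, X2 p}" using sp span_base[of "Y p" "{X p, Y p}"] by auto
  then obtain l1 l2 where kY: "Y p = l1 *\<^sub>R X1 p + l2 *\<^sub>R X2 p" using span2_ex by blast
  have d: "X1 p \<bullet> fr.T0 p = 0" "X2 p \<bullet> fr.T0 p = 0" using fr.dual[OF assms(2)] by (simp_all add: inner_commute)
  have hX: "X p \<bullet> fr.T0 p = 0" unfolding kX using d by (simp add: inner_add_left)
  have hY: "Y p \<bullet> fr.T0 p = 0" unfolding kY using d by (simp add: inner_add_left)
  interpret cf: cfg U X0 X1 X2 X Y p
    using fr.frame_axioms assms(11,12,2) hX hY by (simp add: cfg_def cfg_axioms_def)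
  define a1 where "a1 = fr.T1 p \<bullet> X p"
  define a2 where "a2 = fr.T2 p \<bullet> X p"
  define b1 where "b1 = fr.T1 p \<bullet> Y p"
  define b2 where "b2 = fr.T2 p \<bullet> Y p"
  define D where "D = a1 * b2 - a2 * b1"
  define c where "c = c0_12 X0 X1 X2 p"
  have xa: "X p = a1 *\<^sub>R X1 p + a2 *\<^sub>R X2 p" using cf.a_exp a1_def a2_def by simp
  have yb: "Y p = b1 *\<^sub>R X1 p + b2 *\<^sub>R X2 p" using cf.b_exp b1_def b2_def by simp
  have D0: "D \<noteq> 0"
  proof
    assume D: "D = 0"
    have v1: "b2 *\<^sub>R X p + (- a2) *\<^sub>R Y p = D *\<^sub>R X1 p"
      unfolding xa yb D_def by (simp add: algebra_simps)
    have v2: "b1 *\<^sub>R X p + (- a1) *\<^sub>R Y p = (- D) *\<^sub>R X2 p"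
      unfolding xa yb D_def by (simp add: algebra_simps)
    have e1: "b2 *\<^sub>R X p + (- a2) *\<^sub>R Y p = 0" using v1 D by simp
    have e2: "b1 *\<^sub>R X p + (- a1) *\<^sub>R Y p = 0" using v2 D by simp
    have e1': "(- a2) *\<^sub>R Y p + b2 *\<^sub>R X p = 0" using e1 by (simp only: add.commute)
    have e2': "(- a1) *\<^sub>R Y p + b1 *\<^sub>R X p = 0" using e2 by (simp only: add.commute)
    have sw: "{Y p, X p} = {X p, Y p}" by (rule insert_commute)
    have ind': "independent {Y p, X p}" unfolding sw by (rule assms(13))
    have ne': "Y p \<noteq> X p" using assms(14) by simp
    have "b2 = 0" by (rule indep2[OF assms(13,14) e1])
    moreover have "b1 = 0" by (rule indep2[OF assms(13,14) e2])
    moreover have "- a2 = 0" by (rule indep2[OF ind' ne' e1'])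
    moreover have "- a1 = 0" by (rule indep2[OF ind' ne' e2'])
    ultimately have "X p = 0" using xa by simp
    then have "0 \<in> {X p, Y p}" by (metis insertI1)
    then have "dependent {X p, Y p}" by (rule dependent_zero)
    then show False by (rule notE[OF assms(13)])
  qed
  have OmD: "fr.Om fr.T0 p (X p) (Y p) = D * c"
    unfolding cf.Om_ab fr.Om_c[OF assms(2)] D_def a1_def a2_def b1_def b2_def c_def ..
  have den: "\<And>\<epsilon>. ip (g_eps \<epsilon> X0 X1 X2) p (X p) (X p) * ip (g_eps \<epsilon> X0 X1 X2) p (Y p) (Y p)
      - (ip (g_eps \<epsilon> X0 X1 X2) p (X p) (Y p))\<^sup>2 = D\<^sup>2"
    unfolding cf.ip_XX cf.ip_YY cf.ip_XY D_def a1_def[symmetric] a2_def[symmetric] b1_def[symmetric] b2_def[symmetric]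
    by (simp add: power2_eq_square algebra_simps)
  obtain c0 c1 c2 where R: "\<forall>\<epsilon>. \<epsilon> \<noteq> 0 \<longrightarrow> cf.Rv \<epsilon> = (1/\<epsilon>\<^sup>2) *\<^sub>R cf.VV + c0 + \<epsilon>\<^sup>2 *\<^sub>R c1 + (\<epsilon>\<^sup>2)\<^sup>2 *\<^sub>R c2"
    using cf.R_exp by blast
  have K: "K_ext (g_eps \<epsilon> X0 X1 X2) X Y p + 3 / (4 * \<epsilon>\<^sup>2) * c\<^sup>2
      = (cf.ell c0 + \<epsilon>\<^sup>2 * cf.ell c1 + (\<epsilon>\<^sup>2)\<^sup>2 * cf.ell c2) / D\<^sup>2" if e: "\<epsilon> \<noteq> 0" for \<epsilon>
  proof -
    have "K_ext (g_eps \<epsilon> X0 X1 X2) X Y p = cf.ell (cf.Rv \<epsilon>) / D\<^sup>2"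
      unfolding K_ext_def unfolding den unfolding cf.ip_ell cf.Rv_def ..
    also have "\<dots> = ((1/\<epsilon>\<^sup>2) * (- 3/4 * (D * c)\<^sup>2) + cf.ell c0 + \<epsilon>\<^sup>2 * cf.ell c1 + (\<epsilon>\<^sup>2)\<^sup>2 * cf.ell c2) / D\<^sup>2"
      unfolding R[rule_format, OF e] cf.ell_lin cf.ellVV OmD ..
    finally show ?thesis using D0 e by (simp add: field_simps power2_eq_square)
  qed
  define M where "M = (\<bar>cf.ell c0\<bar> + \<bar>cf.ell c1\<bar> + \<bar>cf.ell c2\<bar>) / D\<^sup>2"
  have "\<forall>\<^sub>F \<epsilon> in at_right 0. norm (K_ext (g_eps \<epsilon> X0 X1 X2) X Y p + 3 / (4 * \<epsilon>\<^sup>2) * (c0_12 X0 X1 X2 p)\<^sup>2)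
      \<le> M * norm (1::real)"
    using eventually_at_right_real[of 0 "1::real", OF zero_less_one]
  proof (rule eventually_mono)
    fix \<epsilon> :: real assume "\<epsilon> \<in> {0<..<1}"
    then have e0: "0 < \<epsilon>" "\<epsilon> < 1" by auto
    have e2: "\<epsilon>\<^sup>2 \<le> 1" "0 \<le> \<epsilon>\<^sup>2" using e0 by (auto simp: power_le_one)
    have e4: "(\<epsilon>\<^sup>2)\<^sup>2 \<le> 1" "0 \<le> (\<epsilon>\<^sup>2)\<^sup>2"
      by (rule power_le_one[OF e2(2) e2(1)]) simp
    have "\<bar>cf.ell c0 + \<epsilon>\<^sup>2 * cf.ell c1 + (\<epsilon>\<^sup>2)\<^sup>2 * cf.ell c2\<bar> \<le> \<bar>cf.ell c0\<bar> + \<epsilon>\<^sup>2 * \<bar>cf.ell c1\<bar> + (\<epsilon>\<^sup>2)\<^sup>2 * \<bar>cf.ell c2\<bar>"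
      using e2 e4 by (simp add: abs_triangle_ineq abs_mult order_trans[OF abs_triangle_ineq] add_mono)
    also have "\<dots> \<le> \<bar>cf.ell c0\<bar> + \<bar>cf.ell c1\<bar> + \<bar>cf.ell c2\<bar>"
      using e2 e4 by (intro add_mono mult_left_le_one_le) auto
    finally have "\<bar>cf.ell c0 + \<epsilon>\<^sup>2 * cf.ell c1 + (\<epsilon>\<^sup>2)\<^sup>2 * cf.ell c2\<bar> / D\<^sup>2 \<le> M"
      unfolding M_def using D0 by (simp add: divide_right_mono)
    then show "norm (K_ext (g_eps \<epsilon> X0 X1 X2) X Y p + 3 / (4 * \<epsilon>\<^sup>2) * (c0_12 X0 X1 X2 p)\<^sup>2) \<le> M * norm (1::real)"
      using K[of \<epsilon>] e0 unfolding c_def by simp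
  qed
  then show ?thesis by (rule bigoI)
qed


end
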